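(* Let $0<p<1$, let $X_1,X_2,\ldots$ be i.i.d. with values in $\{0,1,a\}$, $P(X_1=a)=p$, $P(X_1=0)=P(X_1=1)=\frac{1-p}{2}$, and let $Y_1,Y_2,\ldots$ be i.i.d. Bernoulli$(1/2)$, independent of the $X_i$. Let $L_n$ be the length of a longest common subsequence of $X_1\ldots X_n$ and $Y_1\ldots Y_n$. Let $(Z^k)_{k}$ be generated by the bit-drop scheme described in the context, independently of $(Y_i)$, and let $N^a$ be a Binomial$(n,p)$ random variable independent of $(Z^k)_k$ and $(Y_i)$. For $0\le k\le n$ let $L_n^a(k)$ be the length of a longest common subsequence of $Z^k$ and $Y_1\ldots Y_n$. Then $L_n$ has the same distribution as $L^a_n(n-N^a)$.
   Context: Bit-drop scheme: let $V_1,V_2,\ldots$ be i.i.d. Bernoulli$(1/2)$ variables and let $T_3,T_4,\ldots$ be independent integer-valued random variables, independent of $(V_k)$, with $T_{k+1}$ uniformly distributed on $\{2,\ldots,k\}$. Set $Z^2:=V_1V_2$ and, given the binary word $Z^k=Z^k_1\ldots Z^k_k$, define $Z^{k+1}$ of length $k+1$ by $Z^{k+1}_j:=Z^k_j$ for $j<T_{k+1}$, $Z^{k+1}_{T_{k+1}}:=V_{k+1}$, and $Z^{k+1}_j:=Z^k_{j-1}$ for $T_{k+1}<j\le k+1$. (So $V_{k+1}$ is the bit added at step $k+1$ and $T_{k+1}$ its position.) Convention: $Z^0$ is the empty word and $Z^1:=V_1$. *)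

theory Defs
  imports "HOL-Probability.Probability" "HOL-Library.Sublist"
begin

datatype sym = S0 | S1 | Sa

definition bit :: "bool \<Rightarrow> sym" where
  "bit b = (if b then S1 else S0)"

definition lcs :: "'a list \<Rightarrow> 'a list \<Rightarrow> nat" where
  "lcs xs ys = Max {length zs | zs. subseq zs xs \<and> subseq zs ys}"

text \<open>Insert bit v at (1-based) position t of the word z.\<close>
definition insert_at :: "nat \<Rightarrow> bool \<Rightarrow> bool list \<Rightarrow> bool list" where
  "insert_at t v z = take (t - 1) z @ [v] @ drop (t - 1) z"

text \<open>Law of the word Z^k of the bit-drop scheme: Z^0 empty, Z^1 = V_1,
  Z^2 = V_1 V_2, and for k \<ge> 2, Z^(k+1) is Z^k with a fresh independent
  Bernoulli(1/2) bit V_(k+1) inserted at an independent position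
  T_(k+1) uniform on {2..k}.\<close>
fun bitdrop_pmf :: "nat \<Rightarrow> bool list pmf" where
  "bitdrop_pmf 0 = return_pmf []"
| "bitdrop_pmf (Suc 0) = map_pmf (\<lambda>v. [v]) (bernoulli_pmf (1/2))"
| "bitdrop_pmf (Suc (Suc 0)) =
     do { v1 \<leftarrow> bernoulli_pmf (1/2); v2 \<leftarrow> bernoulli_pmf (1/2); return_pmf [v1, v2] }"
| "bitdrop_pmf (Suc (Suc (Suc k))) =
     do { z \<leftarrow> bitdrop_pmf (Suc (Suc k));
          v \<leftarrow> bernoulli_pmf (1/2);
          t \<leftarrow> pmf_of_set {2..Suc (Suc k)};
          return_pmf (insert_at t v z) }"

end

theory Submission
  imports Defs
begin

lemma ins_rep:
  "bind_pmf (replicate_pmf m B) (\<lambda>z. bind_pmf B (\<lambda>v. return_pmf (take j z @ [v] @ drop j z)))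
   = replicate_pmf (Suc m) B"
proof (induction m arbitrary: j)
  case 0
  then show ?case by (simp add: bind_return_pmf)
next
  case (Suc m)
  show ?case
  proof (cases j)
    case 0
    then show ?thesis by (simp add: bind_assoc_pmf bind_return_pmf bind_commute_pmf[of "replicate_pmf m B"]) (rule bind_commute_pmf)
  next
    case (Suc j')
    have "bind_pmf (replicate_pmf (Suc m) B) (\<lambda>z. bind_pmf B (\<lambda>v. return_pmf (take j z @ [v] @ drop j z)))
      = bind_pmf B (\<lambda>x. bind_pmf (bind_pmf (replicate_pmf m B) (\<lambda>z. bind_pmf B (\<lambda>v. return_pmf (take j' z @ [v] @ drop j' z)))) (\<lambda>w. return_pmf (x # w)))"
      using Suc by (simp add: bind_assoc_pmf bind_return_pmf)
    also have "\<dots> = replicate_pmf (Suc (Suc m)) B"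
      by (subst Suc.IH) simp
    finally show ?thesis .
  qed
qed

lemma insert_at_rep:
  "bind_pmf (replicate_pmf m B) (\<lambda>z. bind_pmf B (\<lambda>v. return_pmf (insert_at t v z)))
   = replicate_pmf (Suc m) B"
  unfolding insert_at_def by (rule ins_rep)

lemma bitdrop_rep: "bitdrop_pmf k = replicate_pmf k (bernoulli_pmf (1/2))"
proof (induction k rule: bitdrop_pmf.induct)
  case 1
  then show ?case by simp
next
  case 2
  then show ?case by (simp add: map_pmf_def bind_return_pmf)
next
  case 3
  then show ?case by (simp add: bind_return_pmf bind_assoc_pmf)
next
  case (4 k)
  have "bitdrop_pmf (Suc (Suc (Suc k))) =
     bind_pmf (pmf_of_set {2..Suc (Suc k)}) (\<lambda>t. bind_pmf (replicate_pmf (Suc (Suc k)) (bernoulli_pmf (1/2)))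
        (\<lambda>z. bind_pmf (bernoulli_pmf (1/2)) (\<lambda>v. return_pmf (insert_at t v z))))"
    using 4 by (simp add: bind_commute_pmf[of "pmf_of_set _"])
  also have "\<dots> = replicate_pmf (Suc (Suc (Suc k))) (bernoulli_pmf (1/2))"
    by (simp only: insert_at_rep bind_pmf_const)
  finally show ?case .
qed

lemma if_ne_Sa [simp]: "(if x then S1 else S0) \<noteq> Sa"
  by auto

lemma X_decomp:
  fixes p :: real and X :: "sym pmf"
  assumes "0 < p" and "p < 1"
    and "pmf X Sa = p" and "pmf X S0 = (1 - p) / 2" and "pmf X S1 = (1 - p) / 2"
  shows "X = bind_pmf (bernoulli_pmf p) (\<lambda>b. if b then return_pmf Sa else map_pmf bit (bernoulli_pmf (1/2)))"
proof (rule pmf_eqI)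
  have bset: "{x::bool. x} = {True}" "{x::bool. \<not> x} = {False}" by auto
  fix s show "pmf X s = pmf (bind_pmf (bernoulli_pmf p) (\<lambda>b. if b then return_pmf Sa else map_pmf bit (bernoulli_pmf (1/2)))) s"
    using assms by (cases s) (auto simp: bset pmf_bind pmf_map measure_pmf_single bit_def vimage_def indicator_def)
qed

lemma filter_rep:
  fixes p :: real and X :: "sym pmf"
  assumes "0 < p" and "p < 1"
    and "pmf X Sa = p" and "pmf X S0 = (1 - p) / 2" and "pmf X S1 = (1 - p) / 2"
  shows "map_pmf (filter (\<lambda>s. s \<noteq> Sa)) (replicate_pmf n X) =
     bind_pmf (binomial_pmf n p) (\<lambda>N. map_pmf (map bit) (replicate_pmf (n - N) (bernoulli_pmf (1/2))))"
proof (induction n)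
  case 0
  then show ?case using assms by (simp add: binomial_pmf_0 bind_return_pmf)
next
  case (Suc n)
  define F where "F = filter (\<lambda>s. s \<noteq> Sa)"
  define B where "B = bernoulli_pmf (1/2::real)"
  define R where "R = (\<lambda>n. bind_pmf (binomial_pmf n p) (\<lambda>N. map_pmf (map bit) (replicate_pmf (n - N) B)))"
  have IH: "map_pmf F (replicate_pmf n X) = R n" using Suc unfolding F_def R_def B_def .
  have pin: "p \<in> {0..1}" using assms by auto
  have "map_pmf F (replicate_pmf (Suc n) X) = bind_pmf X (\<lambda>x. map_pmf (\<lambda>xs. F (x # xs)) (replicate_pmf n X))"
    by (simp add: map_pmf_def bind_assoc_pmf bind_return_pmf)
  also have "\<dots> = bind_pmf (bernoulli_pmf p) (\<lambda>b. if b then map_pmf F (replicate_pmf n X)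
        else bind_pmf B (\<lambda>c. map_pmf (Cons (bit c)) (map_pmf F (replicate_pmf n X))))"
    apply (subst X_decomp[OF assms])
    apply (simp add: bind_assoc_pmf bind_return_pmf bind_map_pmf map_pmf_comp B_def)
    apply (intro bind_pmf_cong refl)
    apply (auto simp: F_def B_def bit_def bind_map_pmf map_pmf_comp map_pmf_def bind_assoc_pmf bind_return_pmf)
    done
  also have "\<dots> = bind_pmf (bernoulli_pmf p) (\<lambda>b. bind_pmf (binomial_pmf n p) (\<lambda>k.
        map_pmf (map bit) (replicate_pmf (Suc n - ((if b then 1 else 0) + k)) B)))"
  proof (intro bind_pmf_cong refl)
    fix b :: bool
    show "(if b then map_pmf F (replicate_pmf n X)
        else bind_pmf B (\<lambda>c. map_pmf (Cons (bit c)) (map_pmf F (replicate_pmf n X)))) =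
        bind_pmf (binomial_pmf n p) (\<lambda>k. map_pmf (map bit) (replicate_pmf (Suc n - ((if b then 1 else 0) + k)) B))"
    proof (cases b)
      case True
      then show ?thesis by (simp add: IH R_def)
    next
      case False
      have "bind_pmf B (\<lambda>c. map_pmf (Cons (bit c)) (R n)) =
          bind_pmf (binomial_pmf n p) (\<lambda>k. bind_pmf B (\<lambda>c. map_pmf (Cons (bit c)) (map_pmf (map bit) (replicate_pmf (n - k) B))))"
        unfolding R_def by (simp add: map_bind_pmf) (rule bind_commute_pmf)
      also have "\<dots> = bind_pmf (binomial_pmf n p) (\<lambda>k. map_pmf (map bit) (replicate_pmf (Suc n - k) B))"
      proof (intro bind_pmf_cong refl)
        fix k assume "k \<in> set_pmf (binomial_pmf n p)"
        then have "k \<le> n" using assms by simp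
        then have "Suc n - k = Suc (n - k)" by simp
        then show "bind_pmf B (\<lambda>c. map_pmf (Cons (bit c)) (map_pmf (map bit) (replicate_pmf (n - k) B))) =
            map_pmf (map bit) (replicate_pmf (Suc n - k) B)"
          by (simp add: map_pmf_def bind_assoc_pmf bind_return_pmf)
      qed
      finally show ?thesis using False IH by simp
    qed
  qed
  also have "\<dots> = R (Suc n)"
    unfolding R_def by (simp add: binomial_pmf_Suc[OF pin] bind_assoc_pmf bind_return_pmf)
  finally show ?case unfolding F_def R_def B_def .
qed


lemma lcs_filter: "lcs xs (map bit ys) = lcs (filter (\<lambda>s. s \<noteq> Sa) xs) (map bit ys)"
proof -
  have eq: "(subseq zs xs \<and> subseq zs (map bit ys)) =
        (subseq zs (filter (\<lambda>s. s \<noteq> Sa) xs) \<and> subseq zs (map bit ys))" for zs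
  proof (intro iffI)
    assume h: "subseq zs xs \<and> subseq zs (map bit ys)"
    then have "set zs \<subseteq> set (map bit ys)" using list_emb_set[of "(=)"] by (metis subsetI)
    then have "filter (\<lambda>s. s \<noteq> Sa) zs = zs" by (auto simp: bit_def filter_id_conv)
    then show "subseq zs (filter (\<lambda>s. s \<noteq> Sa) xs) \<and> subseq zs (map bit ys)"
      using h subseq_filter[of zs xs "\<lambda>s. s \<noteq> Sa"] by simp
  next
    assume "subseq zs (filter (\<lambda>s. s \<noteq> Sa) xs) \<and> subseq zs (map bit ys)"
    then show "subseq zs xs \<and> subseq zs (map bit ys)"
      using subseq_filter_left subseq_order.order_trans by blast
  qed
  then show ?thesis unfolding lcs_def by (simp only: eq)
qed

theorem lemma2:
  fixes p :: real and n :: nat and X :: "sym pmf"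
  assumes "0 < p" and "p < 1"
    and "pmf X Sa = p" and "pmf X S0 = (1 - p) / 2" and "pmf X S1 = (1 - p) / 2"
  shows "map_pmf (\<lambda>(xs, ys). lcs xs (map bit ys))
           (pair_pmf (replicate_pmf n X) (replicate_pmf n (bernoulli_pmf (1/2))))
       = do { N \<leftarrow> binomial_pmf n p;
              z \<leftarrow> bitdrop_pmf (n - N);
              ys \<leftarrow> replicate_pmf n (bernoulli_pmf (1/2));
              return_pmf (lcs (map bit z) (map bit ys)) }"
proof -
  have "map_pmf (\<lambda>(xs, ys). lcs xs (map bit ys))
           (pair_pmf (replicate_pmf n X) (replicate_pmf n (bernoulli_pmf (1/2))))
      = bind_pmf (map_pmf (filter (\<lambda>s. s \<noteq> Sa)) (replicate_pmf n X)) (\<lambda>w.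
          bind_pmf (replicate_pmf n (bernoulli_pmf (1/2))) (\<lambda>ys. return_pmf (lcs w (map bit ys))))"
    unfolding pair_pmf_def map_pmf_def bind_assoc_pmf bind_return_pmf
    by (simp add: bind_assoc_pmf bind_return_pmf lcs_filter[symmetric])
  also have "\<dots> = do { N \<leftarrow> binomial_pmf n p;
              z \<leftarrow> bitdrop_pmf (n - N);
              ys \<leftarrow> replicate_pmf n (bernoulli_pmf (1/2));
              return_pmf (lcs (map bit z) (map bit ys)) }"
    by (simp add: filter_rep[OF assms] bitdrop_rep bind_assoc_pmf bind_map_pmf)
  finally show ?thesis .
qed

end
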